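(* Let $S=(G,P,\Lambda,I)$ be a completely simple semigroup with non-singular sandwich matrix $P$, and let $\mathbf{1}=(1,1_G,1)$. Then the equation $x=y$ is equivalent over $S$ (has the same solution set in $S^2$) to a system of the form $\{t_i(x,y)=\mathbf{1}\mid i\in\mathcal{I}\}$, where each $t_i$ is an $\mathcal{L}_S$-term.
   Context: Rees representation: a completely simple semigroup $S=(G,P,\Lambda,I)$ is given by a group $G$, index sets $\Lambda,I$ (each containing an element $1$), and a matrix $P=(p_{i\lambda})_{i\in I,\lambda\in\Lambda}$ over $G$ normalised so that $p_{1\lambda}=p_{i1}=1_G$; elements are triples $(\lambda,g,i)$ with product $(\lambda,g,i)(\mu,h,j)=(\lambda,gp_{i\mu}h,j)$ and inversion $(\lambda,g,i)^{-1}=(\lambda,p_{i\lambda}^{-1}g^{-1}p_{i\lambda}^{-1},i)$. $P$ is non-singular if it has no two equal rows and no two equal columns. The language $\mathcal{L}_S$ is $\{\cdot,{}^{-1}\}$ plus a constant for each element of $S$; terms are built from variables and constants using products and ${}^{-1}$. Two systems are equivalent over $S$ if they have the same solution set. *)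

theory Defs
  imports "HOL-Algebra.Group"
begin

text \<open>Rees matrix representation of a completely simple semigroup
  S = (G, P, Lambda, I). Elements are triples (lambda, g, i).\<close>

definition rees_data ::
  "('g, 'm) monoid_scheme \<Rightarrow> 'l set \<Rightarrow> 'i set \<Rightarrow> 'l \<Rightarrow> 'i \<Rightarrow> ('i \<Rightarrow> 'l \<Rightarrow> 'g) \<Rightarrow> bool" where
  "rees_data G Lam I oneL oneI P \<longleftrightarrow>
     group G \<and> oneL \<in> Lam \<and> oneI \<in> I \<and>
     (\<forall>i\<in>I. \<forall>l\<in>Lam. P i l \<in> carrier G) \<and>
     (\<forall>l\<in>Lam. P oneI l = \<one>\<^bsub>G\<^esub>) \<and>
     (\<forall>i\<in>I. P i oneL = \<one>\<^bsub>G\<^esub>)"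

definition nonsingular :: "'l set \<Rightarrow> 'i set \<Rightarrow> ('i \<Rightarrow> 'l \<Rightarrow> 'g) \<Rightarrow> bool" where
  "nonsingular Lam I P \<longleftrightarrow>
     (\<forall>i\<in>I. \<forall>j\<in>I. (\<forall>l\<in>Lam. P i l = P j l) \<longrightarrow> i = j) \<and>
     (\<forall>l\<in>Lam. \<forall>m\<in>Lam. (\<forall>i\<in>I. P i l = P i m) \<longrightarrow> l = m)"

definition rees_carrier :: "('g, 'm) monoid_scheme \<Rightarrow> 'l set \<Rightarrow> 'i set \<Rightarrow> ('l \<times> 'g \<times> 'i) set" where
  "rees_carrier G Lam I = Lam \<times> carrier G \<times> I"

fun rees_mult :: "('g, 'm) monoid_scheme \<Rightarrow> ('i \<Rightarrow> 'l \<Rightarrow> 'g) \<Rightarrow>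
    ('l \<times> 'g \<times> 'i) \<Rightarrow> ('l \<times> 'g \<times> 'i) \<Rightarrow> ('l \<times> 'g \<times> 'i)" where
  "rees_mult G P (l, g, i) (m, h, j) = (l, g \<otimes>\<^bsub>G\<^esub> P i m \<otimes>\<^bsub>G\<^esub> h, j)"

fun rees_inv :: "('g, 'm) monoid_scheme \<Rightarrow> ('i \<Rightarrow> 'l \<Rightarrow> 'g) \<Rightarrow>
    ('l \<times> 'g \<times> 'i) \<Rightarrow> ('l \<times> 'g \<times> 'i)" where
  "rees_inv G P (l, g, i) =
     (l, inv\<^bsub>G\<^esub> (P i l) \<otimes>\<^bsub>G\<^esub> inv\<^bsub>G\<^esub> g \<otimes>\<^bsub>G\<^esub> inv\<^bsub>G\<^esub> (P i l), i)"

datatype var = X | Y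

datatype ('v, 'c) sterm =
    Var 'v
  | Const 'c
  | Mul "('v, 'c) sterm" "('v, 'c) sterm"
  | Inv "('v, 'c) sterm"

fun term_consts :: "('v, 'c) sterm \<Rightarrow> 'c set" where
  "term_consts (Var v) = {}"
| "term_consts (Const c) = {c}"
| "term_consts (Mul s t) = term_consts s \<union> term_consts t"
| "term_consts (Inv t) = term_consts t"

fun rees_eval :: "('g, 'm) monoid_scheme \<Rightarrow> ('i \<Rightarrow> 'l \<Rightarrow> 'g) \<Rightarrow>
    ('v \<Rightarrow> 'l \<times> 'g \<times> 'i) \<Rightarrow> ('v, 'l \<times> 'g \<times> 'i) sterm \<Rightarrow> 'l \<times> 'g \<times> 'i" where
  "rees_eval G P \<sigma> (Var v) = \<sigma> v"
| "rees_eval G P \<sigma> (Const c) = c"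
| "rees_eval G P \<sigma> (Mul s t) = rees_mult G P (rees_eval G P \<sigma> s) (rees_eval G P \<sigma> t)"
| "rees_eval G P \<sigma> (Inv t) = rees_inv G P (rees_eval G P \<sigma> t)"

definition asg :: "'a \<Rightarrow> 'a \<Rightarrow> var \<Rightarrow> 'a" where
  "asg a b = (\<lambda>v. case v of X \<Rightarrow> a | Y \<Rightarrow> b)"

end

theory Submission
  imports Defs
begin

lemma eq_of_mult_inv:
  assumes "group G" "u \<in> carrier G" "w \<in> carrier G" "u \<otimes>\<^bsub>G\<^esub> inv\<^bsub>G\<^esub> w = \<one>\<^bsub>G\<^esub>"
  shows "u = w"
proof -
  interpret group G by fact
  have "u = u \<otimes>\<^bsub>G\<^esub> (inv\<^bsub>G\<^esub> w \<otimes>\<^bsub>G\<^esub> w)" using assms by simp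
  also have "\<dots> = (u \<otimes>\<^bsub>G\<^esub> inv\<^bsub>G\<^esub> w) \<otimes>\<^bsub>G\<^esub> w" using assms(2,3) by (simp add: m_assoc)
  also have "\<dots> = w" using assms by simp
  finally show ?thesis .
qed

theorem mainTheorem4:
  fixes G :: "('g, 'm) monoid_scheme" and Lam :: "'l set" and I :: "'i set"
    and oneL :: 'l and oneI :: 'i and P :: "'i \<Rightarrow> 'l \<Rightarrow> 'g"
  assumes "rees_data G Lam I oneL oneI P"
    and "nonsingular Lam I P"
  shows "\<exists>T :: (var, 'l \<times> 'g \<times> 'i) sterm set.
           (\<forall>t\<in>T. term_consts t \<subseteq> rees_carrier G Lam I) \<and>
           (\<forall>a\<in>rees_carrier G Lam I. \<forall>b\<in>rees_carrier G Lam I.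
              a = b \<longleftrightarrow> (\<forall>t\<in>T. rees_eval G P (asg a b) t = (oneL, \<one>\<^bsub>G\<^esub>, oneI)))"
proof -
  interpret group G using assms(1) by (simp add: rees_data_def)
  have oL: "oneL \<in> Lam" and oI: "oneI \<in> I"
    and Pc: "\<And>i l. i \<in> I \<Longrightarrow> l \<in> Lam \<Longrightarrow> P i l \<in> carrier G"
    and P1: "\<And>l. l \<in> Lam \<Longrightarrow> P oneI l = \<one>\<^bsub>G\<^esub>"
    and P2: "\<And>i. i \<in> I \<Longrightarrow> P i oneL = \<one>\<^bsub>G\<^esub>"
    using assms(1) by (auto simp: rees_data_def)
  define t where "t k n =
    Mul (Mul (Mul (Const (oneL, \<one>\<^bsub>G\<^esub>, k)) (Var X)) (Const (n, \<one>\<^bsub>G\<^esub>, oneI)))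
        (Inv (Mul (Mul (Const (oneL, \<one>\<^bsub>G\<^esub>, k)) (Var Y)) (Const (n, \<one>\<^bsub>G\<^esub>, oneI))))" for k n
  have ev: "rees_eval G P (asg (l, g, i) (m, h, j)) (t k n) =
      (oneL, (P k l \<otimes>\<^bsub>G\<^esub> g \<otimes>\<^bsub>G\<^esub> P i n) \<otimes>\<^bsub>G\<^esub> inv\<^bsub>G\<^esub> (P k m \<otimes>\<^bsub>G\<^esub> h \<otimes>\<^bsub>G\<^esub> P j n), oneI)"
    if "k \<in> I" "n \<in> Lam" "l \<in> Lam" "m \<in> Lam" "i \<in> I" "j \<in> I" "g \<in> carrier G" "h \<in> carrier G"
    for k n l g i m h j
    using that oL oI Pc P1 P2 by (simp add: t_def asg_def m_assoc)
  show ?thesis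
  proof (intro exI[of _ "{t k n | k n. k \<in> I \<and> n \<in> Lam}"] conjI ballI)
    fix s assume "s \<in> {t k n | k n. k \<in> I \<and> n \<in> Lam}"
    then show "term_consts s \<subseteq> rees_carrier G Lam I"
      using oL oI by (auto simp: t_def rees_carrier_def)
  next
    fix a b assume a: "a \<in> rees_carrier G Lam I" and b: "b \<in> rees_carrier G Lam I"
    obtain l g i where aa: "a = (l, g, i)" "l \<in> Lam" "g \<in> carrier G" "i \<in> I"
      using a by (auto simp: rees_carrier_def)
    obtain m h j where bb: "b = (m, h, j)" "m \<in> Lam" "h \<in> carrier G" "j \<in> I"
      using b by (auto simp: rees_carrier_def)
    show "a = b \<longleftrightarrow> (\<forall>s\<in>{t k n | k n. k \<in> I \<and> n \<in> Lam}.
            rees_eval G P (asg a b) s = (oneL, \<one>\<^bsub>G\<^esub>, oneI))"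
    proof
      assume "a = b"
      then show "\<forall>s\<in>{t k n | k n. k \<in> I \<and> n \<in> Lam}. rees_eval G P (asg a b) s = (oneL, \<one>\<^bsub>G\<^esub>, oneI)"
        using aa bb ev Pc by auto
    next
      assume H: "\<forall>s\<in>{t k n | k n. k \<in> I \<and> n \<in> Lam}. rees_eval G P (asg a b) s = (oneL, \<one>\<^bsub>G\<^esub>, oneI)"
      have E: "P k l \<otimes>\<^bsub>G\<^esub> g \<otimes>\<^bsub>G\<^esub> P i n = P k m \<otimes>\<^bsub>G\<^esub> h \<otimes>\<^bsub>G\<^esub> P j n" if "k \<in> I" "n \<in> Lam" for k n
      proof -
        have "rees_eval G P (asg a b) (t k n) = (oneL, \<one>\<^bsub>G\<^esub>, oneI)" using H that by blast
        then have "(P k l \<otimes>\<^bsub>G\<^esub> g \<otimes>\<^bsub>G\<^esub> P i n) \<otimes>\<^bsub>G\<^esub> inv\<^bsub>G\<^esub> (P k m \<otimes>\<^bsub>G\<^esub> h \<otimes>\<^bsub>G\<^esub> P j n) = \<one>\<^bsub>G\<^esub>"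
          using ev[OF that aa(2) bb(2) aa(4) bb(4) aa(3) bb(3)] aa bb by simp
        then show ?thesis
          using eq_of_mult_inv[OF is_group] that aa bb Pc by simp
      qed
      have gh: "g = h" using E[OF oI oL] P1 P2 aa bb oI oL by simp
      have "\<forall>n\<in>Lam. P i n = P j n"
      proof
        fix n assume n: "n \<in> Lam"
        have "g \<otimes>\<^bsub>G\<^esub> P i n = g \<otimes>\<^bsub>G\<^esub> P j n" using E[OF oI n] P1 aa bb gh by simp
        then show "P i n = P j n" using aa bb n Pc by (metis Units_l_cancel Units_eq)
      qed
      then have ij: "i = j" using assms(2) aa bb by (auto simp: nonsingular_def)
      have "\<forall>k\<in>I. P k l = P k m"
      proof
        fix k assume k: "k \<in> I"
        have "P k l \<otimes>\<^bsub>G\<^esub> g = P k m \<otimes>\<^bsub>G\<^esub> g" using E[OF k oL] P2 aa bb gh Pc[OF k aa(2)] Pc[OF k bb(2)] by simp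
        then show "P k l = P k m" using aa bb k Pc by (metis right_cancel)
      qed
      then have "l = m" using assms(2) aa bb by (auto simp: nonsingular_def)
      then show "a = b" using aa bb gh ij by simp
    qed
  qed
qed

end
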